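(* Let $T$ be a linear transformation of a finite-dimensional real vector space $W$, and assume $W$ splits as a direct sum of (real) eigenspaces of $T$ with eigenvalues $\neq\pm1$. Let $W^+\subseteq W$ be a subspace having zero intersection with the contracting subspace of $W$ determined by $T$, and fix a norm $\|\cdot\|$ on $W$. Then there is a constant $c<1$ depending only on $T$, and a constant $A$ depending only on $T$, $W^+$ and $\|\cdot\|$, such that for all $w^+\in W^+$ and all integers $0\leq j\leq k$, $$\|T^jw^+\|\leq A\,c^{k-j}\|T^kw^+\|.$$
   Context: The contracting subspace of $W$ determined by $T$ is the sum of the eigenspaces of $T$ whose eigenvalues have absolute value $<1$. *)

theory Defs
  imports "HOL-Analysis.Analysis"
begin

definition eigenspace :: "('a::real_vector \<Rightarrow> 'a) \<Rightarrow> real \<Rightarrow> 'a set" where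
  "eigenspace T l = {x. T x = l *\<^sub>R x}"

definition contracting_subspace :: "('a::real_vector \<Rightarrow> 'a) \<Rightarrow> 'a set" where
  "contracting_subspace T = span (\<Union>l\<in>{l. \<bar>l\<bar> < 1}. eigenspace T l)"

definition is_norm :: "('a::real_vector \<Rightarrow> real) \<Rightarrow> bool" where
  "is_norm N \<longleftrightarrow> (\<forall>x y. N (x + y) \<le> N x + N y) \<and> (\<forall>a x. N (a *\<^sub>R x) = \<bar>a\<bar> * N x)
      \<and> (\<forall>x. N x = 0 \<longleftrightarrow> x = 0)"

end

theory Submission
  imports Defs
begin
lemma N_zero: assumes "is_norm N" shows "N 0 = 0"
  using assms unfolding is_norm_def by auto

lemma N_nonneg: assumes "is_norm N" shows "N x \<ge> 0"
proof -
  have "N (x + (-x)) \<le> N x + N (-x)" using assms unfolding is_norm_def by blast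
  moreover have "N (-x) = N x" using assms unfolding is_norm_def
    by (metis abs_minus_cancel abs_one mult_1 scaleR_minus1_left)
  ultimately show ?thesis using N_zero[OF assms] by simp
qed

lemma N_sum: assumes "is_norm N"
  shows "N (\<Sum>i\<in>I. c i *\<^sub>R v i) \<le> (\<Sum>i\<in>I. \<bar>c i\<bar> * N (v i))"
proof (induction I rule: infinite_finite_induct)
  case (infinite A) then show ?case using N_zero[OF assms] by simp
next
  case empty then show ?case using N_zero[OF assms] by simp
next
  case (insert x F)
  have "N (\<Sum>i\<in>insert x F. c i *\<^sub>R v i) = N (c x *\<^sub>R v x + (\<Sum>i\<in>F. c i *\<^sub>R v i))"
    using insert by simp
  also have "\<dots> \<le> N (c x *\<^sub>R v x) + N (\<Sum>i\<in>F. c i *\<^sub>R v i)"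
    using assms unfolding is_norm_def by blast
  also have "\<dots> \<le> \<bar>c x\<bar> * N (v x) + (\<Sum>i\<in>F. \<bar>c i\<bar> * N (v i))"
    using insert assms unfolding is_norm_def by simp
  finally show ?case using insert by simp
qed

lemma N_bound: fixes N :: "'a::euclidean_space \<Rightarrow> real"
  assumes "is_norm N" shows "\<exists>a. \<forall>x. N x \<le> a * norm x"
proof (intro exI allI)
  fix x :: 'a
  have "N x = N (\<Sum>i\<in>Basis. (x \<bullet> i) *\<^sub>R i)" by (simp add: euclidean_representation)
  also have "\<dots> \<le> (\<Sum>i\<in>Basis. \<bar>x \<bullet> i\<bar> * N i)" by (rule N_sum[OF assms])
  also have "\<dots> \<le> (\<Sum>i\<in>Basis. norm x * N i)"
    by (intro sum_mono mult_right_mono Basis_le_norm N_nonneg[OF assms])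
  also have "\<dots> = (\<Sum>i\<in>Basis. N i) * norm x" by (simp add: sum_distrib_left mult.commute)
  finally show "N x \<le> (\<Sum>i\<in>Basis. N i) * norm x" .
qed

lemma N_cont: fixes N :: "'a::euclidean_space \<Rightarrow> real"
  assumes "is_norm N" shows "continuous_on UNIV N"
proof -
  obtain a where a: "\<And>x. N x \<le> a * norm x" using N_bound[OF assms] by blast
  define a' where "a' = \<bar>a\<bar> + 1"
  have a'0: "a' > 0" unfolding a'_def by simp
  have a': "N x \<le> a' * norm x" for x
  proof -
    have "a * norm x \<le> a' * norm x" unfolding a'_def by (intro mult_right_mono) auto
    then show ?thesis using a[of x] by simp
  qed
  have tri: "N x \<le> N y + N (x - y)" for x y
    using assms unfolding is_norm_def by (metis add.commute diff_add_cancel)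
  have sym: "N (x - y) = N (y - x)" for x y
    using assms unfolding is_norm_def by (metis abs_minus_cancel abs_one minus_diff_eq mult_1 scaleR_minus1_left)
  have lip: "\<bar>N x - N y\<bar> \<le> a' * norm (x - y)" for x y
    using tri[of x y] tri[of y x] a'[of "x - y"] sym[of x y] by (auto simp: norm_minus_commute)
  show ?thesis unfolding continuous_on_iff
  proof (intro ballI allI impI)
    fix x e assume "x \<in> (UNIV::'a set)" "(0::real) < e"
    show "\<exists>d>0. \<forall>x'\<in>UNIV. dist x' x < d \<longrightarrow> dist (N x') (N x) < e"
    proof (intro exI[of _ "e / a'"] conjI ballI impI)
      show "e / a' > 0" using \<open>e > 0\<close> a'0 by simp
      fix x' assume "dist x' x < e / a'"
      then have "a' * norm (x' - x) < e" using a'0 by (simp add: dist_norm field_simps)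
      then show "dist (N x') (N x) < e" using lip[of x' x] by (simp add: dist_real_def)
    qed
  qed
qed

lemma ratio_bound:
  fixes f g :: "'a::euclidean_space \<Rightarrow> real"
  assumes V: "closed V" "subspace V"
    and cf: "continuous_on UNIV f" and cg: "continuous_on UNIV g"
    and hf: "\<And>r x. f (r *\<^sub>R x) = \<bar>r\<bar> * f x" and hg: "\<And>r x. g (r *\<^sub>R x) = \<bar>r\<bar> * g x"
    and pos: "\<And>x. x \<in> V \<Longrightarrow> x \<noteq> 0 \<Longrightarrow> g x > 0"
  shows "\<exists>K. \<forall>x\<in>V. f x \<le> K * g x"
proof -
  define C where "C = V \<inter> sphere 0 1"
  have cC: "compact C" unfolding C_def using V(1) by (simp add: closed_Int_compact)
  have f0: "f 0 = 0" using hf[of 0 0] by simp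
  have g0: "g 0 = 0" using hg[of 0 0] by simp
  have uC: "(1 / norm x) *\<^sub>R x \<in> C" if "x \<in> V" "x \<noteq> 0" for x
    using that V(2) by (simp add: C_def subspace_scale)
  show ?thesis
  proof (cases "C = {}")
    case True
    have "x = 0" if "x \<in> V" for x using uC[OF that] True by blast
    then show ?thesis using f0 g0 by (intro exI[of _ 0]) (metis order_refl mult_zero_left)
  next
    case False
    obtain xm where xm: "xm \<in> C" "\<forall>y\<in>C. g xm \<le> g y"
      using continuous_attains_inf[OF cC False continuous_on_subset[OF cg]] by auto
    obtain xM where xM: "xM \<in> C" "\<forall>y\<in>C. f y \<le> f xM"
      using continuous_attains_sup[OF cC False continuous_on_subset[OF cf]] by auto
    have m: "g xm > 0" using pos xm(1) unfolding C_def by (metis IntD1 IntD2 mem_sphere_0 norm_zero zero_neq_one)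
    show ?thesis
    proof (intro exI[of _ "\<bar>f xM\<bar> / g xm"] ballI)
      fix x assume x: "x \<in> V"
      show "f x \<le> \<bar>f xM\<bar> / g xm * g x"
      proof (cases "x = 0")
        case True then show ?thesis using f0 g0 by simp
      next
        case False
        define u where "u = (1 / norm x) *\<^sub>R x"
        have u: "u \<in> C" using uC[OF x False] u_def by simp
        have xu: "norm x *\<^sub>R u = x" using False by (simp add: u_def)
        have "f x = norm x * f u" using hf[of "norm x" u] xu by simp
        also have "\<dots> \<le> norm x * \<bar>f xM\<bar>" using xM(2) u by (intro mult_left_mono) force+
        also have "\<dots> = \<bar>f xM\<bar> / g xm * (norm x * g xm)" using m by simp
        also have "\<dots> \<le> \<bar>f xM\<bar> / g xm * (norm x * g u)"
          using xm(2) u m by (intro mult_left_mono) auto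
        also have "norm x * g u = g x" using hg[of "norm x" u] xu by simp
        finally show ?thesis .
      qed
    qed
  qed
qed

theorem lemma8p3:
  fixes T :: "'a::euclidean_space \<Rightarrow> 'a"
  assumes "linear T"
    and "span (\<Union>l\<in>{l. l \<noteq> 1 \<and> l \<noteq> -1}. eigenspace T l) = UNIV"
  shows "\<exists>c::real. 0 < c \<and> c < 1 \<and>
           (\<forall>(Wp::'a set) (N::'a \<Rightarrow> real).
              subspace Wp \<and> Wp \<inter> contracting_subspace T = {0} \<and> is_norm N \<longrightarrow>
              (\<exists>A::real. \<forall>w\<in>Wp. \<forall>j k::nat. j \<le> k \<longrightarrow>
                  N ((T ^^ j) w) \<le> A * c ^ (k - j) * N ((T ^^ k) w)))"
proof -
  define U where "U = (\<Union>l\<in>{l. l \<noteq> 1 \<and> l \<noteq> -1}. eigenspace T l)"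
  obtain B where B: "B \<subseteq> U" "independent B" "U \<subseteq> span B" by (rule basis_exists[of U]) blast+
  have spanB: "span B = UNIV"
    using span_minimal[OF B(3) subspace_span] assms(2) unfolding U_def by auto
  have finB: "finite B" using independent_bound[OF B(2)] by blast
  have evex: "\<exists>l. l \<noteq> 1 \<and> l \<noteq> -1 \<and> T b = l *\<^sub>R b" if "b \<in> B" for b
    using B(1) that unfolding U_def eigenspace_def by auto
  define ev where "ev b = (SOME l. l \<noteq> 1 \<and> l \<noteq> -1 \<and> T b = l *\<^sub>R b)" for b
  have ev: "ev b \<noteq> 1 \<and> ev b \<noteq> -1 \<and> T b = ev b *\<^sub>R b" if "b \<in> B" for b
    unfolding ev_def using someI_ex[OF evex[OF that]] .
  have evabs: "\<bar>ev b\<bar> \<noteq> 1" if "b \<in> B" for b using ev[OF that] by (auto simp: abs_if split: if_splits)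
  define r where "r = representation B"
  have rsum: "(\<Sum>b\<in>B. r x b *\<^sub>R b) = x" for x
    unfolding r_def by (rule sum_representation_eq) (use B(2) spanB finB in auto)
  have rne: "r x b = 0" if "b \<notin> B" for x b
    using representation_ne_zero[of B x b] that unfolding r_def by blast
  have rlin: "linear (\<lambda>x. r x b)" for b
    by (rule linearI) (simp_all add: r_def representation_add[OF B(2)] representation_scale[OF B(2)] spanB)
  have rscale: "r (t *\<^sub>R x) b = t * r x b" for t x b
    unfolding r_def using representation_scale[OF B(2), of x t] spanB by simp
  have rbasis: "r b' b = (if b = b' then 1 else 0)" if "b' \<in> B" for b' b
    unfolding r_def using representation_basis[OF B(2) that] by simp
  have rT: "r (T x) b = ev b * r x b" for x b
  proof -
    have "T x = T (\<Sum>b\<in>B. r x b *\<^sub>R b)" using rsum by simp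
    also have "\<dots> = (\<Sum>b'\<in>B. (r x b' * ev b') *\<^sub>R b')"
      using assms(1) ev by (simp add: linear_sum linear_scale)
    finally have "r (T x) b = r (\<Sum>b'\<in>B. (r x b' * ev b') *\<^sub>R b') b" by simp
    also have "\<dots> = (\<Sum>b'\<in>B. r ((r x b' * ev b') *\<^sub>R b') b)"
      using linear_sum[OF rlin[of b]] by simp
    also have "\<dots> = (\<Sum>b'\<in>B. (r x b' * ev b') * (if b = b' then 1 else 0))"
      using rscale rbasis by simp
    also have "\<dots> = ev b * r x b"
      using rne[of b x] finB by (cases "b \<in> B") (auto simp: if_distrib cong: if_cong)
    finally show ?thesis .
  qed
  have rTp: "r ((T ^^ j) x) b = ev b ^ j * r x b" for j x b
    by (induction j) (auto simp: rT)
  define Be where "Be = {b\<in>B. 1 < \<bar>ev b\<bar>}"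
  define Bc where "Bc = {b\<in>B. \<bar>ev b\<bar> < 1}"
  have BeBc: "B = Be \<union> Bc" "Be \<inter> Bc = {}" "finite Be" "finite Bc"
    using evabs finB unfolding Be_def Bc_def by force+
  define c where "c = Max (insert (1/2) ((\<lambda>b. 1 / \<bar>ev b\<bar>) ` Be))"
  have finc: "finite (insert (1/2) ((\<lambda>b. 1 / \<bar>ev b\<bar>) ` Be))" using BeBc by simp
  have c12: "1/2 \<le> c" unfolding c_def using finc by (intro Max_ge) auto
  have cev: "1 / \<bar>ev b\<bar> \<le> c" if "b \<in> Be" for b unfolding c_def using finc that by (intro Max_ge) auto
  have c1: "c < 1" unfolding c_def using finc
    by (subst Max_less_iff) (auto simp: Be_def)
  have cev1: "1 \<le> c * \<bar>ev b\<bar>" if "b \<in> Be" for b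
    using cev[OF that] that unfolding Be_def by (auto simp: divide_le_eq)
  show ?thesis
  proof (rule exI[of _ c], intro conjI allI impI)
    show "0 < c" using c12 by simp
    show "c < 1" by (rule c1)
    fix Wp :: "'a set" and N :: "'a \<Rightarrow> real"
    assume H: "subspace Wp \<and> Wp \<inter> contracting_subspace T = {0} \<and> is_norm N"
    then have Wp: "subspace Wp" and Wpc: "Wp \<inter> contracting_subspace T = {0}" and N: "is_norm N"
      by auto
    define S where "S x = (\<Sum>b\<in>B. \<bar>r x b\<bar>)" for x
    define Se where "Se x = (\<Sum>b\<in>Be. \<bar>r x b\<bar>)" for x
    have rcont: "continuous_on UNIV (\<lambda>x. r x b)" for b
      using rlin[of b] by (intro linear_continuous_on) (simp add: linear_conv_bounded_linear)
    have contS: "continuous_on UNIV S" unfolding S_def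
      by (intro continuous_intros rcont)
    have contSe: "continuous_on UNIV Se" unfolding Se_def
      by (intro continuous_intros rcont)
    have homS: "S (t *\<^sub>R x) = \<bar>t\<bar> * S x" for t x
      by (simp add: S_def rscale abs_mult sum_distrib_left)
    have homSe: "Se (t *\<^sub>R x) = \<bar>t\<bar> * Se x" for t x
      by (simp add: Se_def rscale abs_mult sum_distrib_left)
    have homN: "N (t *\<^sub>R x) = \<bar>t\<bar> * N x" for t x using N unfolding is_norm_def by blast
    have posS: "S x > 0" if "x \<noteq> 0" for x
    proof (rule ccontr)
      assume "\<not> S x > 0"
      moreover have "S x \<ge> 0" unfolding S_def by (intro sum_nonneg) simp
      ultimately have "S x = 0" by simp
      then have "\<forall>b\<in>B. r x b = 0" using finB unfolding S_def by (simp add: sum_nonneg_eq_0_iff)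
      then have "x = 0" using rsum[of x] by simp
      with that show False by simp
    qed
    have posN: "N x > 0" if "x \<noteq> 0" for x
    proof -
      have "N x \<noteq> 0" using N that unfolding is_norm_def by blast
      then show ?thesis using N_nonneg[OF N, of x] by simp
    qed
    have Bc_contr: "b \<in> contracting_subspace T" if "b \<in> Bc" for b
    proof -
      have "b \<in> eigenspace T (ev b)" using ev that unfolding Bc_def eigenspace_def by auto
      then show ?thesis unfolding contracting_subspace_def
        using that unfolding Bc_def by (intro span_base) auto
    qed
    have posSe: "Se x > 0" if "x \<in> Wp" "x \<noteq> 0" for x
    proof (rule ccontr)
      assume "\<not> Se x > 0"
      moreover have "Se x \<ge> 0" unfolding Se_def by (intro sum_nonneg) simp
      ultimately have "Se x = 0" by simp
      then have z: "\<forall>b\<in>Be. r x b = 0" using BeBc unfolding Se_def by (simp add: sum_nonneg_eq_0_iff)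
      have "x = (\<Sum>b\<in>Be. r x b *\<^sub>R b) + (\<Sum>b\<in>Bc. r x b *\<^sub>R b)"
        using rsum[of x] BeBc by (metis sum.union_disjoint)
      also have "\<dots> = (\<Sum>b\<in>Bc. r x b *\<^sub>R b)" using z by simp
      also have "\<dots> \<in> contracting_subspace T"
        unfolding contracting_subspace_def
        by (intro span_sum span_scale) (use Bc_contr[unfolded contracting_subspace_def] in blast)
      finally have "x \<in> contracting_subspace T" .
      then show False using Wpc that by blast
    qed
    obtain a where a: "\<forall>x\<in>UNIV. N x \<le> a * S x"
      using ratio_bound[OF closed_UNIV subspace_UNIV N_cont[OF N] contS homN homS posS] by blast
    obtain bb where bb: "\<forall>x\<in>UNIV. S x \<le> bb * N x"
      using ratio_bound[OF closed_UNIV subspace_UNIV contS N_cont[OF N] homS homN posN] by blast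
    obtain K where K: "\<forall>x\<in>Wp. S x \<le> K * Se x"
      using ratio_bound[OF closed_subspace[OF Wp] Wp contS contSe homS homSe posSe] by blast
    show "\<exists>A. \<forall>w\<in>Wp. \<forall>j k. j \<le> k \<longrightarrow> N ((T ^^ j) w) \<le> A * c ^ (k - j) * N ((T ^^ k) w)"
    proof (intro exI[of _ "\<bar>a\<bar> * (1 + \<bar>K\<bar>) * \<bar>bb\<bar>"] ballI allI impI)
      fix w j k assume w: "w \<in> Wp" and jk: "j \<le> (k::nat)"
      define x where "x b = \<bar>r w b\<bar>" for b
      define l where "l b = \<bar>ev b\<bar>" for b
      have x0: "x b \<ge> 0" for b by (simp add: x_def)
      have l0: "l b \<ge> 0" for b by (simp add: l_def)
      have cpos: "c \<ge> 0" using c12 by simp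
      have STj: "S ((T ^^ m) w) = (\<Sum>b\<in>Be. l b ^ m * x b) + (\<Sum>b\<in>Bc. l b ^ m * x b)" for m
        unfolding S_def rTp x_def l_def using BeBc
        by (simp add: abs_mult power_abs sum.union_disjoint)
      define E where "E = (\<Sum>b\<in>Be. l b ^ k * x b)"
      have E_le: "E \<le> S ((T ^^ k) w)" unfolding E_def STj
        by (simp add: sum_nonneg mult_nonneg_nonneg x0 l0)
      have key1: "l b ^ j \<le> c ^ (k - j) * l b ^ k" if "b \<in> Be" for b
      proof -
        have "1 \<le> (c * l b) ^ (k - j)" using cev1[OF that] by (simp add: l_def one_le_power)
        then have "l b ^ j * 1 \<le> l b ^ j * (c * l b) ^ (k - j)"
          by (intro mult_left_mono) (auto simp: l0)
        also have "\<dots> = c ^ (k - j) * l b ^ k" using jk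
          by (simp add: power_mult_distrib power_add[symmetric])
        finally show ?thesis by simp
      qed
      have key2: "1 \<le> c ^ (k - j) * l b ^ k" if "b \<in> Be" for b
      proof -
        have lb1: "1 \<le> l b" using that by (simp add: Be_def l_def)
        have "1 \<le> (c * l b) ^ (k - j)" using cev1[OF that] by (simp add: l_def one_le_power)
        also have "\<dots> = c ^ (k - j) * l b ^ (k - j)" by (simp add: power_mult_distrib)
        also have "\<dots> \<le> c ^ (k - j) * l b ^ k"
          using lb1 jk cpos by (intro mult_left_mono power_increasing) auto
        finally show ?thesis .
      qed
      have P1: "(\<Sum>b\<in>Be. l b ^ j * x b) \<le> c ^ (k - j) * E"
        unfolding E_def sum_distrib_left
        by (intro sum_mono) (use key1 x0 in \<open>simp add: mult.assoc[symmetric] mult_right_mono\<close>)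
      have "(\<Sum>b\<in>Bc. l b ^ j * x b) \<le> (\<Sum>b\<in>Bc. x b)"
      proof (intro sum_mono)
        fix b assume "b \<in> Bc"
        then have "l b ^ j \<le> 1" using l0 by (simp add: Bc_def l_def power_le_one)
        then show "l b ^ j * x b \<le> x b" using x0[of b] by (simp add: mult_left_le_one_le l0)
      qed
      also have "\<dots> \<le> S w" unfolding S_def x_def using BeBc
        by (simp add: sum.union_disjoint)
      also have "\<dots> \<le> \<bar>K\<bar> * Se w" using K w
        by (smt (verit, best) Se_def abs_ge_self mult_right_mono sum_nonneg abs_ge_zero)
      also have "Se w = (\<Sum>b\<in>Be. x b)" unfolding Se_def x_def ..
      also have "\<dots> \<le> c ^ (k - j) * E"
        unfolding E_def sum_distrib_left
      proof (intro sum_mono)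
        fix b assume b: "b \<in> Be"
        show "x b \<le> c ^ (k - j) * (l b ^ k * x b)"
          using key2[OF b] x0[of b] mult_right_mono[of 1 "c ^ (k - j) * l b ^ k" "x b"]
          by (simp add: mult.assoc)
      qed
      finally have P2: "(\<Sum>b\<in>Bc. l b ^ j * x b) \<le> \<bar>K\<bar> * (c ^ (k - j) * E)"
        by (simp add: mult_left_mono)
      have Sj: "S ((T ^^ j) w) \<le> (1 + \<bar>K\<bar>) * c ^ (k - j) * S ((T ^^ k) w)"
      proof -
        have "S ((T ^^ j) w) \<le> (1 + \<bar>K\<bar>) * (c ^ (k - j) * E)"
          unfolding STj using P1 P2 by (simp add: algebra_simps)
        also have "\<dots> \<le> (1 + \<bar>K\<bar>) * (c ^ (k - j) * S ((T ^^ k) w))"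
          using E_le cpos by (intro mult_left_mono) auto
        finally show ?thesis by (simp add: mult.assoc)
      qed
      have Spos: "S y \<ge> 0" for y unfolding S_def by (simp add: sum_nonneg)
      have Sk: "S ((T ^^ k) w) \<le> \<bar>bb\<bar> * N ((T ^^ k) w)"
        using bb N_nonneg[OF N] by (meson UNIV_I abs_ge_self mult_right_mono order_trans)
      have "N ((T ^^ j) w) \<le> \<bar>a\<bar> * S ((T ^^ j) w)"
        using a Spos by (meson UNIV_I abs_ge_self mult_right_mono order_trans)
      also have "\<dots> \<le> \<bar>a\<bar> * ((1 + \<bar>K\<bar>) * c ^ (k - j) * S ((T ^^ k) w))"
        using Sj by (intro mult_left_mono) auto
      also have "\<bar>a\<bar> * ((1 + \<bar>K\<bar>) * c ^ (k - j) * S ((T ^^ k) w))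
          \<le> \<bar>a\<bar> * ((1 + \<bar>K\<bar>) * c ^ (k - j) * (\<bar>bb\<bar> * N ((T ^^ k) w)))"
        using cpos Sk by (intro mult_left_mono) auto
      finally show "N ((T ^^ j) w) \<le> \<bar>a\<bar> * (1 + \<bar>K\<bar>) * \<bar>bb\<bar> * c ^ (k - j) * N ((T ^^ k) w)"
        by (simp add: algebra_simps)
    qed
  qed
qed

end
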